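(* The centre of the affine Schur algebra $\mathcal S=\mathrm{End}_{\mathcal H}(\bigoplus_{J\subseteq\mathbb I}\mathbf v_J\mathcal H)$ is $Z(\mathcal S)=\{\cdot z\mid z\in Z(\mathcal H)\}$, the set of endomorphisms given by multiplication with central elements $z$ of $\mathcal H$.
   Context: Setting: $q$ is the residue field cardinality of a finite extension of $\mathbb Q_p$, $\Bbbk$ algebraically closed of characteristic $\ne p$ with $q\ne1$, $n\ge 2$. $\mathcal H$ is the unital $\Bbbk$-algebra generated by $T_1,\dots,T_{n-1},X_1^{\pm1},\dots,X_n^{\pm1}$ with $(T_i-q)(T_i+1)=0$, braid relations among the $T_i$, commuting Laurent variables $X_j$, $T_iX_j=X_jT_i$ for $j\notin\{i,i+1\}$, and $T_iX_iT_i=qX_{i+1}$. $\mathbb I=\{s_1,\dots,s_{n-1}\}$ are the simple transpositions of $\mathfrak S_n$, $W_J=\langle J\rangle$, $T_w=T_{i_1}\cdots T_{i_r}$ for reduced $w=s_{i_1}\cdots s_{i_r}$, $\mathbf v_J=\sum_{w\in W_J}T_w$, and $\mathbf v_J\mathcal H$ are right ideals; $\mathcal S$ has product given by composition. (Multiplication by a central $z$ preserves each $\mathbf v_J\mathcal H$ and is $\mathcal H$-linear.) *)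

theory Defs
  imports Main "HOL-Computational_Algebra.Polynomial" "HOL-Computational_Algebra.Primes"
begin

datatype hgen = GT nat | GX nat | GXi nat
  \<comment> \<open>GT i = T_i, GX j = X_j, GXi j = X_j^{-1}\<close>

definition valid_gens :: "nat \<Rightarrow> hgen set" where
  "valid_gens n = GT ` {1..<n} \<union> GX ` {1..n} \<union> GXi ` {1..n}"

text \<open>An element of the free (noncommutative) k-algebra on the generators is a finitely
  supported coefficient function on words in the generators.\<close>
definition free_elt :: "nat \<Rightarrow> (hgen list \<Rightarrow> 'k::field) \<Rightarrow> bool" where
  "free_elt n c \<longleftrightarrow> finite {w. c w \<noteq> 0} \<and> (\<forall>w. c w \<noteq> 0 \<longrightarrow> set w \<subseteq> valid_gens n)"

definition lc :: "('k::field \<times> hgen list) list \<Rightarrow> hgen list \<Rightarrow> 'k" where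
  "lc ts = (\<lambda>v. sum_list (map (\<lambda>(c, w). if w = v then c else 0) ts))"

text \<open>u * r * v in the free algebra, for words u, v.\<close>
definition sandwich :: "hgen list \<Rightarrow> (hgen list \<Rightarrow> 'k::field) \<Rightarrow> hgen list \<Rightarrow> hgen list \<Rightarrow> 'k" where
  "sandwich u r v = (\<lambda>w. if length u + length v \<le> length w \<and> take (length u) w = u
        \<and> drop (length w - length v) w = v
     then r (drop (length u) (take (length w - length v) w)) else 0)"

text \<open>The defining relations of the affine Hecke algebra (as elements of the free algebra,
  each required to be zero); q is the residue field cardinality.\<close>
definition hecke_rels :: "nat \<Rightarrow> nat \<Rightarrow> (hgen list \<Rightarrow> 'k::field) set" where
  "hecke_rels n q =
     {lc [(1, [GT i, GT i]), (- (of_nat q - 1), [GT i]), (- of_nat q, [])] | i. 1 \<le> i \<and> i < n}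
   \<union> {lc [(1, [GT i, GT (Suc i), GT i]), (-1, [GT (Suc i), GT i, GT (Suc i)])] | i. 1 \<le> i \<and> Suc i < n}
   \<union> {lc [(1, [GT i, GT j]), (-1, [GT j, GT i])] | i j. 1 \<le> i \<and> i < n \<and> 1 \<le> j \<and> j < n \<and> (Suc i < j \<or> Suc j < i)}
   \<union> {lc [(1, [GX j, GXi j]), (-1, [])] | j. 1 \<le> j \<and> j \<le> n}
   \<union> {lc [(1, [GXi j, GX j]), (-1, [])] | j. 1 \<le> j \<and> j \<le> n}
   \<union> {lc [(1, [a, b]), (-1, [b, a])] | a b. a \<in> GX ` {1..n} \<union> GXi ` {1..n} \<and> b \<in> GX ` {1..n} \<union> GXi ` {1..n}}
   \<union> {lc [(1, [GT i, GX j]), (-1, [GX j, GT i])] | i j. 1 \<le> i \<and> i < n \<and> 1 \<le> j \<and> j \<le> n \<and> j \<noteq> i \<and> j \<noteq> Suc i}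
   \<union> {lc [(1, [GT i, GX i, GT i]), (- of_nat q, [GX (Suc i)])] | i. 1 \<le> i \<and> i < n}"

inductive_set hecke_ideal :: "nat \<Rightarrow> nat \<Rightarrow> (hgen list \<Rightarrow> 'k::field) set" for n q where
  zero: "(\<lambda>_. 0) \<in> hecke_ideal n q"
| add: "a \<in> hecke_ideal n q \<Longrightarrow> b \<in> hecke_ideal n q \<Longrightarrow> (\<lambda>w. a w + b w) \<in> hecke_ideal n q"
| smult: "a \<in> hecke_ideal n q \<Longrightarrow> (\<lambda>w. c * a w) \<in> hecke_ideal n q"
| gen: "r \<in> hecke_rels n q \<Longrightarrow> set u \<subseteq> valid_gens n \<Longrightarrow> set v \<subseteq> valid_gens n
        \<Longrightarrow> sandwich u r v \<in> hecke_ideal n q"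

definition gen_val :: "(nat \<Rightarrow> 'h) \<Rightarrow> (nat \<Rightarrow> 'h) \<Rightarrow> (nat \<Rightarrow> 'h) \<Rightarrow> hgen \<Rightarrow> 'h" where
  "gen_val T X Xi g = (case g of GT i \<Rightarrow> T i | GX j \<Rightarrow> X j | GXi j \<Rightarrow> Xi j)"

definition eval_free :: "('k::field \<Rightarrow> 'h::ring_1) \<Rightarrow> (nat \<Rightarrow> 'h) \<Rightarrow> (nat \<Rightarrow> 'h) \<Rightarrow> (nat \<Rightarrow> 'h)
    \<Rightarrow> (hgen list \<Rightarrow> 'k) \<Rightarrow> 'h" where
  "eval_free sc T X Xi c = (\<Sum>w\<in>{w. c w \<noteq> 0}. sc (c w) * prod_list (map (gen_val T X Xi) w))"

text \<open>'h, with scalars sc and elements T_i, X_j, X_j^{-1}, is (isomorphic to) the unital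
  k-algebra presented by the generators and relations of the affine Hecke algebra:
  the evaluation map from the free algebra is surjective with kernel exactly the ideal
  generated by the relations.\<close>
definition is_affine_hecke ::
  "nat \<Rightarrow> nat \<Rightarrow> ('k::field \<Rightarrow> 'h::ring_1) \<Rightarrow> (nat \<Rightarrow> 'h) \<Rightarrow> (nat \<Rightarrow> 'h) \<Rightarrow> (nat \<Rightarrow> 'h) \<Rightarrow> bool" where
  "is_affine_hecke n q sc T X Xi \<longleftrightarrow>
     sc 1 = 1 \<and> (\<forall>a b. sc (a + b) = sc a + sc b) \<and> (\<forall>a b. sc (a * b) = sc a * sc b)
   \<and> (\<forall>a h. sc a * h = h * sc a)
   \<and> (\<forall>c. free_elt n c \<longrightarrow> (eval_free sc T X Xi c = 0 \<longleftrightarrow> c \<in> hecke_ideal n q))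
   \<and> (\<forall>h. \<exists>c. free_elt n c \<and> eval_free sc T X Xi c = h)"

definition stp :: "nat \<Rightarrow> nat \<Rightarrow> nat" where
  "stp i = (\<lambda>x. if x = i then Suc i else if x = Suc i then i else x)"

definition perm_of_word :: "nat list \<Rightarrow> nat \<Rightarrow> nat" where
  "perm_of_word ws = foldr (\<lambda>i f. stp i \<circ> f) ws id"

definition reduced_word :: "nat \<Rightarrow> nat list \<Rightarrow> (nat \<Rightarrow> nat) \<Rightarrow> bool" where
  "reduced_word n ws w \<longleftrightarrow> set ws \<subseteq> {1..<n} \<and> perm_of_word ws = w
     \<and> (\<forall>ws'. set ws' \<subseteq> {1..<n} \<and> perm_of_word ws' = w \<longrightarrow> length ws \<le> length ws')"

text \<open>Parabolic subgroup W_J, J a subset of {1..n-1} (indices of simple transpositions).\<close>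
definition WJ :: "nat set \<Rightarrow> (nat \<Rightarrow> nat) set" where
  "WJ J = perm_of_word ` lists J"

definition Tw :: "nat \<Rightarrow> (nat \<Rightarrow> 'h::ring_1) \<Rightarrow> (nat \<Rightarrow> nat) \<Rightarrow> 'h" where
  "Tw n T w = prod_list (map T (SOME ws. reduced_word n ws w))"

definition vJ :: "nat \<Rightarrow> (nat \<Rightarrow> 'h::ring_1) \<Rightarrow> nat set \<Rightarrow> 'h" where
  "vJ n T J = (\<Sum>w\<in>WJ J. Tw n T w)"

definition schur_mod :: "nat \<Rightarrow> (nat \<Rightarrow> 'h::ring_1) \<Rightarrow> (nat set \<Rightarrow> 'h) set" where
  "schur_mod n T = {m. \<forall>J. (J \<subseteq> {1..<n} \<longrightarrow> (\<exists>h. m J = vJ n T J * h))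
                          \<and> (\<not> J \<subseteq> {1..<n} \<longrightarrow> m J = 0)}"

text \<open>H-linear endomorphisms of the right H-module (extensional: zero outside the module).\<close>
definition schur_alg :: "nat \<Rightarrow> (nat \<Rightarrow> 'h::ring_1) \<Rightarrow> ((nat set \<Rightarrow> 'h) \<Rightarrow> (nat set \<Rightarrow> 'h)) set" where
  "schur_alg n T = {f. (\<forall>m\<in>schur_mod n T. f m \<in> schur_mod n T)
     \<and> (\<forall>m\<in>schur_mod n T. \<forall>m'\<in>schur_mod n T. f (\<lambda>J. m J + m' J) = (\<lambda>J. f m J + f m' J))
     \<and> (\<forall>m\<in>schur_mod n T. \<forall>h. f (\<lambda>J. m J * h) = (\<lambda>J. f m J * h))
     \<and> (\<forall>m. m \<notin> schur_mod n T \<longrightarrow> f m = (\<lambda>_. 0))}"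

definition center_of :: "('a \<Rightarrow> 'a) set \<Rightarrow> ('a \<Rightarrow> 'a) set" where
  "center_of S = {f\<in>S. \<forall>g\<in>S. f \<circ> g = g \<circ> f}"

definition ring_center :: "'h::ring_1 set" where
  "ring_center = {z. \<forall>h. z * h = h * z}"

definition mult_map :: "nat \<Rightarrow> (nat \<Rightarrow> 'h::ring_1) \<Rightarrow> 'h \<Rightarrow> (nat set \<Rightarrow> 'h) \<Rightarrow> (nat set \<Rightarrow> 'h)" where
  "mult_map n T z = (\<lambda>m. if m \<in> schur_mod n T then (\<lambda>J. m J * z) else (\<lambda>_. 0))"

end

theory Submission
  imports Defs
begin

lemma vJ_empty: "vJ n T {} = (1::'h::ring_1)"
proof -
  have W: "WJ {} = {id}" unfolding WJ_def by (auto simp: perm_of_word_def)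
  have r: "reduced_word n [] id" unfolding reduced_word_def by (simp add: perm_of_word_def)
  have "\<And>ws. reduced_word n ws id \<Longrightarrow> ws = []"
    unfolding reduced_word_def by (auto dest!: spec[of _ "[]"] simp: perm_of_word_def)
  hence "(SOME ws. reduced_word n ws id) = []" using someI[of "\<lambda>ws. reduced_word n ws id", OF r] by blast
  thus ?thesis using W by (simp add: vJ_def Tw_def)
qed

lemma zero_in: "(\<lambda>_. 0) \<in> schur_mod n T"
  unfolding schur_mod_def mem_Collect_eq
  by (intro allI conjI impI exI[of _ 0]) simp_all

lemma eps_in:
  assumes "K \<subseteq> {1..<n}" "x = vJ n T K * h0"
  shows "(\<lambda>J. if J = K then x else 0) \<in> schur_mod n T"
  unfolding schur_mod_def mem_Collect_eq
proof (intro allI conjI impI)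
  fix J
  show "\<exists>h. (if J = K then x else 0) = vJ n T J * h" if "J \<subseteq> {1..<n}"
  proof (cases "J = K")
    case True thus ?thesis using assms by (intro exI[of _ h0]) simp
  next
    case False thus ?thesis by (intro exI[of _ 0]) simp
  qed
  show "(if J = K then x else 0) = 0" if "\<not> J \<subseteq> {1..<n}" using that assms by auto
qed

lemma mod_I: "m \<in> schur_mod n T \<Longrightarrow> J \<subseteq> {1..<n} \<Longrightarrow> \<exists>h. m J = vJ n T J * h"
  unfolding schur_mod_def by blast

lemma mod_O: "m \<in> schur_mod n T \<Longrightarrow> \<not> J \<subseteq> {1..<n} \<Longrightarrow> m J = 0"
  unfolding schur_mod_def by blast

lemma mod_intro: "(\<And>J. J \<subseteq> {1..<n} \<Longrightarrow> \<exists>h. m J = vJ n T J * h) \<Longrightarrow> (\<And>J. \<not> J \<subseteq> {1..<n} \<Longrightarrow> m J = 0) \<Longrightarrow> m \<in> schur_mod n T"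
  unfolding schur_mod_def by blast

lemma add_in: "m \<in> schur_mod n T \<Longrightarrow> m' \<in> schur_mod n T \<Longrightarrow> (\<lambda>J. m J + m' J) \<in> schur_mod n T"
proof (rule mod_intro)
  fix J assume m: "m \<in> schur_mod n T" and m': "m' \<in> schur_mod n T"
  { assume J: "J \<subseteq> {1..<n}"
    obtain h where h: "m J = vJ n T J * h" using mod_I[OF m J] by blast
    obtain h' where h': "m' J = vJ n T J * h'" using mod_I[OF m' J] by blast
    have "m J + m' J = vJ n T J * (h + h')" unfolding h h' by (simp add: distrib_left)
    thus "\<exists>h. m J + m' J = vJ n T J * h" by (rule exI) }
  { assume J: "\<not> J \<subseteq> {1..<n}"
    show "m J + m' J = 0" using mod_O[OF m J] mod_O[OF m' J] by simp }
qed

lemma mul_in: "m \<in> schur_mod n T \<Longrightarrow> (\<lambda>J. m J * h) \<in> schur_mod n T"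
proof (rule mod_intro)
  fix J assume m: "m \<in> schur_mod n T"
  { assume J: "J \<subseteq> {1..<n}"
    obtain h' where h': "m J = vJ n T J * h'" using mod_I[OF m J] by blast
    have "m J * h = vJ n T J * (h' * h)" unfolding h' by (simp add: mult.assoc)
    thus "\<exists>h'. m J * h = vJ n T J * h'" by (rule exI) }
  { assume J: "\<not> J \<subseteq> {1..<n}"
    show "m J * h = 0" using mod_O[OF m J] by simp }
qed

lemma S_cl: "g \<in> schur_alg n T \<Longrightarrow> m \<in> schur_mod n T \<Longrightarrow> g m \<in> schur_mod n T"
  unfolding schur_alg_def by (drule CollectD) (erule conjE, erule bspec)
lemma S_mul: "g \<in> schur_alg n T \<Longrightarrow> m \<in> schur_mod n T \<Longrightarrow> g (\<lambda>J. m J * h) = (\<lambda>J. g m J * h)"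
  unfolding schur_alg_def by (drule CollectD) (elim conjE, drule bspec, assumption, erule spec)
lemma S_out: "g \<in> schur_alg n T \<Longrightarrow> m \<notin> schur_mod n T \<Longrightarrow> g m = (\<lambda>_. 0)"
  unfolding schur_alg_def by (drule CollectD) (elim conjE, drule spec, erule mp, assumption)

lemma S_zero: "g \<in> schur_alg n T \<Longrightarrow> g (\<lambda>_. 0) = (\<lambda>_. 0)"
proof -
  assume g: "g \<in> schur_alg n T"
  have "\<forall>h. g (\<lambda>J. (\<lambda>_. 0) J * h) = (\<lambda>J. g (\<lambda>_. 0) J * h)"
  proof -
    show ?thesis using S_mul[OF g zero_in[of n T]] by simp
  qed
  from spec[OF this, of 0] show ?thesis by simp
qed

lemma mult_map_in:
  assumes z: "z \<in> ring_center"
  shows "mult_map n T z \<in> schur_alg n T"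
  unfolding schur_alg_def
proof (intro CollectI conjI ballI allI impI)
  have zc: "\<And>h. z * h = h * z" using z by (simp add: ring_center_def)
  fix m assume m: "m \<in> schur_mod n T"
  show "mult_map n T z m \<in> schur_mod n T" using m mul_in[of m n T z] by (simp add: mult_map_def)
  { fix m' assume m': "m' \<in> schur_mod n T"
    show "mult_map n T z (\<lambda>J. m J + m' J) = (\<lambda>J. mult_map n T z m J + mult_map n T z m' J)"
      using m m' add_in[of m n T m'] by (simp add: mult_map_def distrib_right) }
  { fix h
    show "mult_map n T z (\<lambda>J. m J * h) = (\<lambda>J. mult_map n T z m J * h)"
      using m mul_in[of m n T h] by (simp add: mult_map_def mult.assoc zc) }
next
  fix m assume "m \<notin> schur_mod n T"
  thus "mult_map n T z m = (\<lambda>_. 0)" by (simp add: mult_map_def)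
qed

lemma mult_map_central:
  assumes z: "z \<in> ring_center" and g: "g \<in> schur_alg n T"
  shows "mult_map n T z \<circ> g = g \<circ> mult_map n T z"
proof
  fix m
  show "(mult_map n T z \<circ> g) m = (g \<circ> mult_map n T z) m"
  proof (cases "m \<in> schur_mod n T")
    case True
    have "g m \<in> schur_mod n T" using S_cl[OF g True] .
    moreover have "g (\<lambda>J. m J * z) = (\<lambda>J. g m J * z)" using S_mul[OF g True] .
    ultimately show ?thesis using True by (simp add: mult_map_def)
  next
    case False
    have "g m = (\<lambda>_. 0)" using S_out[OF g False] .
    thus ?thesis using False zero_in S_zero[OF g] by (simp add: mult_map_def)
  qed
qed

lemma gK_in:
  assumes K: "K \<subseteq> {1..<n}" and x: "x = vJ n T K * h0"
  shows "(\<lambda>m. if m \<in> schur_mod n T then (\<lambda>J. if J = K then x * m {} else 0) else (\<lambda>_. 0)) \<in> schur_alg n T"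
  unfolding schur_alg_def
proof (intro CollectI conjI ballI allI impI)
  fix m assume "m \<in> schur_mod n T"
  show "(if m \<in> schur_mod n T then (\<lambda>J. if J = K then x * m {} else 0) else (\<lambda>_. 0)) \<in> schur_mod n T"
    using eps_in[of K n "x * m {}" T "h0 * m {}", OF K] x by (simp add: mult.assoc \<open>m \<in> _\<close>)
next
  fix m m' assume "m \<in> schur_mod n T" "m' \<in> schur_mod n T"
  thus "(if (\<lambda>J. m J + m' J) \<in> schur_mod n T then (\<lambda>J. if J = K then x * (m {} + m' {}) else 0) else (\<lambda>_. 0)) =
       (\<lambda>J. (if m \<in> schur_mod n T then (\<lambda>J. if J = K then x * m {} else 0) else (\<lambda>_. 0)) J +
            (if m' \<in> schur_mod n T then (\<lambda>J. if J = K then x * m' {} else 0) else (\<lambda>_. 0)) J)"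
    using add_in[of m n T m'] by (auto simp: distrib_left)
next
  fix m h assume "m \<in> schur_mod n T"
  thus "(if (\<lambda>J. m J * h) \<in> schur_mod n T then (\<lambda>J. if J = K then x * (m {} * h) else 0) else (\<lambda>_. 0)) =
       (\<lambda>J. (if m \<in> schur_mod n T then (\<lambda>J. if J = K then x * m {} else 0) else (\<lambda>_. 0)) J * h)"
    using mul_in[of m n T h] by (auto simp: mult.assoc)
qed auto

lemma pK_in:
  "(\<lambda>m. if m \<in> schur_mod n T then (\<lambda>J. if J = K then m K else 0) else (\<lambda>_. 0)) \<in> schur_alg n T"
  unfolding schur_alg_def
proof (intro CollectI conjI ballI allI impI)
  fix m assume m: "m \<in> schur_mod n T"
  show "(if m \<in> schur_mod n T then (\<lambda>J. if J = K then m K else 0) else (\<lambda>_. 0)) \<in> schur_mod n T"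
  proof (cases "K \<subseteq> {1..<n}")
    case True
    then obtain h0 where "m K = vJ n T K * h0" using mod_I[OF m] by blast
    thus ?thesis using m eps_in[of K n "m K" T h0, OF True] by simp
  next
    case False
    have "(\<lambda>J. if J = K then m K else 0) = (\<lambda>_. 0)" using mod_O[OF m False] by auto
    thus ?thesis using m zero_in[of n T] by simp
  qed
next
  fix m m' assume "m \<in> schur_mod n T" "m' \<in> schur_mod n T"
  thus "(if (\<lambda>J. m J + m' J) \<in> schur_mod n T then (\<lambda>J. if J = K then m K + m' K else 0) else (\<lambda>_. 0)) =
       (\<lambda>J. (if m \<in> schur_mod n T then (\<lambda>J. if J = K then m K else 0) else (\<lambda>_. 0)) J +
            (if m' \<in> schur_mod n T then (\<lambda>J. if J = K then m' K else 0) else (\<lambda>_. 0)) J)"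
    using add_in[of m n T m'] by auto
next
  fix m h assume "m \<in> schur_mod n T"
  thus "(if (\<lambda>J. m J * h) \<in> schur_mod n T then (\<lambda>J. if J = K then m K * h else 0) else (\<lambda>_. 0)) =
       (\<lambda>J. (if m \<in> schur_mod n T then (\<lambda>J. if J = K then m K else 0) else (\<lambda>_. 0)) J * h)"
    using mul_in[of m n T h] by auto
qed auto

lemma center_sub:
  assumes f: "f \<in> center_of (schur_alg n T)"
  shows "f \<in> mult_map n T ` ring_center"
proof -
  have fS: "f \<in> schur_alg n T" and comm: "\<And>g. g \<in> schur_alg n T \<Longrightarrow> f \<circ> g = g \<circ> f"
    using f by (auto simp: center_of_def)
  define \<delta> where "\<delta> = (\<lambda>J::nat set. if J = {} then (1::'a) else 0)"
  have \<delta>M: "\<delta> \<in> schur_mod n T" unfolding \<delta>_def using eps_in[of "{}" n 1 T 1] by (simp add: vJ_empty)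
  have f\<delta>M: "f \<delta> \<in> schur_mod n T" using S_cl[OF fS \<delta>M] .
  define z where "z = f \<delta> {}"
  have key: "f (\<lambda>J. if J = K then x else 0) = (\<lambda>J. if J = K then x * z else 0)"
    if K: "K \<subseteq> {1..<n}" and x: "x = vJ n T K * h0" for K x h0
  proof -
    let ?g = "(\<lambda>m. if m \<in> schur_mod n T then (\<lambda>J. if J = K then x * m {} else 0) else (\<lambda>_. 0))"
    have "(f \<circ> ?g) \<delta> = (?g \<circ> f) \<delta>" using comm[OF gK_in[OF K x]] by simp
    hence "f (?g \<delta>) = ?g (f \<delta>)" by simp
    moreover have "?g \<delta> = (\<lambda>J. if J = K then x else 0)" using \<delta>M by (auto simp: \<delta>_def)
    moreover have "?g (f \<delta>) = (\<lambda>J. if J = K then x * z else 0)" using f\<delta>M z_def by auto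
    ultimately show ?thesis by simp
  qed
  have zc: "z \<in> ring_center" unfolding ring_center_def
  proof (intro CollectI allI)
    fix h
    have e: "(\<lambda>J::nat set. if J = {} then h else 0) = (\<lambda>J. \<delta> J * h)" by (auto simp: \<delta>_def)
    have "f (\<lambda>J. \<delta> J * h) = (\<lambda>J. f \<delta> J * h)" using S_mul[OF fS \<delta>M] .
    moreover have "f (\<lambda>J::nat set. if J = {} then h else 0) = (\<lambda>J. if J = {} then h * z else 0)"
      using key[of "{}" h h] by (simp add: vJ_empty)
    ultimately have "(\<lambda>J. f \<delta> J * h) = (\<lambda>J::nat set. if J = {} then h * z else 0)" using e by simp
    from fun_cong[OF this, of "{}"] show "z * h = h * z" by (simp add: z_def)
  qed
  have "f = mult_map n T z"
  proof
    fix m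
    show "f m = mult_map n T z m"
    proof (cases "m \<in> schur_mod n T")
      case False
      have "f m = (\<lambda>_. 0)" using S_out[OF fS False] .
      thus ?thesis using False by (simp add: mult_map_def)
    next
      case True
      have fmM: "f m \<in> schur_mod n T" using S_cl[OF fS True] .
      have "f m K = m K * z" for K
      proof (cases "K \<subseteq> {1..<n}")
        case False
        have "m K = 0" using mod_O[OF True False] .
        moreover have "f m K = 0" using mod_O[OF fmM False] .
        ultimately show ?thesis by simp
      next
        case K: True
        obtain h0 where h0: "m K = vJ n T K * h0" using mod_I[OF True K] by blast
        let ?p = "(\<lambda>m. if m \<in> schur_mod n T then (\<lambda>J. if J = K then m K else 0) else (\<lambda>_. 0))"
        have "(f \<circ> ?p) m = (?p \<circ> f) m" using comm[OF pK_in] by simp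
        hence "f (\<lambda>J. if J = K then m K else 0) = (\<lambda>J. if J = K then f m K else 0)"
          using True fmM by simp
        with key[OF K h0] have "(\<lambda>J. if J = K then m K * z else 0) = (\<lambda>J. if J = K then f m K else 0)" by simp
        from fun_cong[OF this, of K] show ?thesis by simp
      qed
      thus ?thesis using True by (auto simp: mult_map_def)
    qed
  qed
  thus ?thesis using zc by blast
qed

theorem lemma4p14:
  fixes p q n :: nat
    and sc :: "'k::field \<Rightarrow> 'h::ring_1"
    and T X Xi :: "nat \<Rightarrow> 'h"
  assumes "prime p"
    and "\<exists>f\<ge>1. q = p ^ f"
    and "\<forall>P :: 'k poly. degree P > 0 \<longrightarrow> (\<exists>x. poly P x = 0)"
    and "of_nat p \<noteq> (0::'k)"
    and "of_nat q \<noteq> (1::'k)"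
    and "n \<ge> 2"
    and "is_affine_hecke n q sc T X Xi"
  shows "center_of (schur_alg n T) = mult_map n T ` ring_center"
proof
  show "center_of (schur_alg n T) \<subseteq> mult_map n T ` ring_center" using center_sub by blast
  show "mult_map n T ` ring_center \<subseteq> center_of (schur_alg n T)"
    using mult_map_in mult_map_central by (fastforce simp: center_of_def)
qed

end
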